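(* For every $n\ge3$, the Cayley--Dickson loop $Q_n$ is not automorphic, i.e. $Inn(Q_n)\not\le Aut(Q_n)$.
   Context: Cayley--Dickson loops: $Q_0=\{1,-1\}\subset\mathbb{R}$ with conjugation $x^*=x$. For $n\ge1$, $Q_n=\{(x,0),(x,1)\mid x\in Q_{n-1}\}$ with multiplication $(x,0)(y,0)=(xy,0)$, $(x,0)(y,1)=(yx,1)$, $(x,1)(y,0)=(xy^*,1)$, $(x,1)(y,1)=(-y^*x,0)$ and conjugation $(x,0)^*=(x^*,0)$, $(x,1)^*=(-x,1)$, where $-(x,a)=(-x,a)$. $Q_n$ is a loop with neutral element $1=(1,0,\dots,0)$ (nonassociative exactly when $n\ge3$). For a loop $Q$, $Inn(Q)=\{f\in Mlt(Q)\mid f(1)=1\}$ where $Mlt(Q)=\langle L_x,R_x\mid x\in Q\rangle$, $L_x(a)=xa$, $R_x(a)=ax$; $Aut(Q)$ is the group of loop automorphisms. A loop is automorphic if $Inn(Q)\le Aut(Q)$. *)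

theory Defs
  imports Main
begin

text \<open>An element of Q_0 is CR a with a in {1,-1}
  (a real number, represented as an integer); an element (x,a) of Q_n with n >= 1
  is CP x a, where the bit a is encoded as a boolean (False = 0, True = 1).\<close>
datatype cd = CR int | CP cd bool

fun cd_neg :: "cd \<Rightarrow> cd" where
  "cd_neg (CR a) = CR (- a)"
| "cd_neg (CP x b) = CP (cd_neg x) b"

fun cd_conj :: "cd \<Rightarrow> cd" where
  "cd_conj (CR a) = CR a"
| "cd_conj (CP x False) = CP (cd_conj x) False"
| "cd_conj (CP x True) = CP (cd_neg x) True"

lemma size_cd_neg [simp]: "size (cd_neg x) = size x"
  by (induction x) auto

lemma size_cd_conj [simp]: "size (cd_conj x) = size x"
  by (induction x rule: cd_conj.induct) auto

function cd_mult :: "cd \<Rightarrow> cd \<Rightarrow> cd" where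
  "cd_mult (CR a) (CR b) = CR (a * b)"
| "cd_mult (CP x False) (CP y False) = CP (cd_mult x y) False"
| "cd_mult (CP x False) (CP y True) = CP (cd_mult y x) True"
| "cd_mult (CP x True) (CP y False) = CP (cd_mult x (cd_conj y)) True"
| "cd_mult (CP x True) (CP y True) = CP (cd_neg (cd_mult (cd_conj y) x)) False"
| "cd_mult (CR a) (CP y b) = undefined"
| "cd_mult (CP x b) (CR a) = undefined"
  by pat_completeness auto
termination
  by (relation "measure (\<lambda>(x, y). size x + size y)") auto

fun CD :: "nat \<Rightarrow> cd set" where
  "CD 0 = {CR 1, CR (-1)}"
| "CD (Suc n) = {CP x b | x b. x \<in> CD n}"

fun cd_one :: "nat \<Rightarrow> cd" where
  "cd_one 0 = CR 1"
| "cd_one (Suc n) = CP (cd_one n) False"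

text \<open>Multiplication group Mlt(Q) = <L_x, R_x | x in Q>, as maps on the carrier Q
  (only values on Q matter): generated from the identity by composing with the
  translations L_x, R_x and their inverses (on Q).\<close>
inductive_set Mlt :: "'a set \<Rightarrow> ('a \<Rightarrow> 'a \<Rightarrow> 'a) \<Rightarrow> ('a \<Rightarrow> 'a) set"
  for Q :: "'a set" and mul :: "'a \<Rightarrow> 'a \<Rightarrow> 'a" where
  Mlt_id: "(\<lambda>a. a) \<in> Mlt Q mul"
| Mlt_L: "f \<in> Mlt Q mul \<Longrightarrow> x \<in> Q \<Longrightarrow> (\<lambda>a. mul x (f a)) \<in> Mlt Q mul"
| Mlt_R: "f \<in> Mlt Q mul \<Longrightarrow> x \<in> Q \<Longrightarrow> (\<lambda>a. mul (f a) x) \<in> Mlt Q mul"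
| Mlt_Linv: "f \<in> Mlt Q mul \<Longrightarrow> x \<in> Q \<Longrightarrow> (\<lambda>a. inv_into Q (\<lambda>b. mul x b) (f a)) \<in> Mlt Q mul"
| Mlt_Rinv: "f \<in> Mlt Q mul \<Longrightarrow> x \<in> Q \<Longrightarrow> (\<lambda>a. inv_into Q (\<lambda>b. mul b x) (f a)) \<in> Mlt Q mul"

definition Inn :: "'a set \<Rightarrow> ('a \<Rightarrow> 'a \<Rightarrow> 'a) \<Rightarrow> 'a \<Rightarrow> ('a \<Rightarrow> 'a) set" where
  "Inn Q mul e = {f \<in> Mlt Q mul. f e = e}"

definition is_loop_aut :: "'a set \<Rightarrow> ('a \<Rightarrow> 'a \<Rightarrow> 'a) \<Rightarrow> ('a \<Rightarrow> 'a) \<Rightarrow> bool" where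
  "is_loop_aut Q mul f \<longleftrightarrow> bij_betw f Q Q \<and> (\<forall>a\<in>Q. \<forall>b\<in>Q. f (mul a b) = mul (f a) (f b))"

definition automorphic :: "'a set \<Rightarrow> ('a \<Rightarrow> 'a \<Rightarrow> 'a) \<Rightarrow> 'a \<Rightarrow> bool" where
  "automorphic Q mul e \<longleftrightarrow> (\<forall>f\<in>Inn Q mul e. is_loop_aut Q mul f)"

end

theory Submission
  imports Defs
begin

fun pad :: "nat \<Rightarrow> cd \<Rightarrow> cd" where
  "pad 0 x = x"
| "pad (Suc k) x = CP (pad k x) False"

lemma pad_mem: "x \<in> CD m \<Longrightarrow> pad k x \<in> CD (m + k)"
  by (induction k) auto

lemma pad_mult: "cd_mult (pad k x) (pad k y) = pad k (cd_mult x y)"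
  by (induction k) auto

lemma pad_inj: "pad k x = pad k y \<Longrightarrow> x = y"
  by (induction k) auto

lemma pad_one: "cd_one (m + k) = pad k (cd_one m)"
  by (induction k) auto

theorem mainTheorem7:
  fixes n :: nat
  assumes "n \<ge> 3"
  shows "\<not> automorphic (CD n) cd_mult (cd_one n)"
proof
  assume A: "automorphic (CD n) cd_mult (cd_one n)"
  obtain k where nk: "n = 3 + k" using assms by (metis add.commute le_Suc_ex)
  define j where "j = CP (CP (CP (CR 1) False) False) True"
  define mj where "mj = CP (CP (CP (CR (-1)) False) False) True"
  define a where "a = CP (CP (CP (CR 1) False) True) False"
  define b where "b = CP (CP (CP (CR 1) True) False) False"
  define f where "f = (\<lambda>x. cd_mult (cd_mult (pad k j) x) (pad k mj))"
  have j3: "j \<in> CD 3" and mj3: "mj \<in> CD 3" and a3: "a \<in> CD 3" and b3: "b \<in> CD 3"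
    unfolding j_def mj_def a_def b_def by (auto simp: numeral_eq_Suc)
  have jn: "pad k j \<in> CD n" and mjn: "pad k mj \<in> CD n"
   and an: "pad k a \<in> CD n" and bn: "pad k b \<in> CD n"
    using pad_mem[OF j3] pad_mem[OF mj3] pad_mem[OF a3] pad_mem[OF b3] nk by auto
  have "(\<lambda>x. cd_mult (pad k j) x) \<in> Mlt (CD n) cd_mult"
    using Mlt.Mlt_L[OF Mlt.Mlt_id jn] .
  hence fM: "f \<in> Mlt (CD n) cd_mult"
    unfolding f_def using Mlt.Mlt_R mjn by fastforce
  have "f (cd_one n) = cd_one n"
    unfolding f_def nk pad_one pad_mult
    by (simp add: j_def mj_def numeral_eq_Suc)
  hence "f \<in> Inn (CD n) cd_mult (cd_one n)" using fM by (simp add: Inn_def)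
  hence "is_loop_aut (CD n) cd_mult f" using A by (simp add: automorphic_def)
  hence "f (cd_mult (pad k a) (pad k b)) = cd_mult (f (pad k a)) (f (pad k b))"
    using an bn by (simp add: is_loop_aut_def)
  hence "pad k (cd_mult (cd_mult j (cd_mult a b)) mj)
       = pad k (cd_mult (cd_mult (cd_mult j a) mj) (cd_mult (cd_mult j b) mj))"
    unfolding f_def pad_mult .
  hence "cd_mult (cd_mult j (cd_mult a b)) mj
       = cd_mult (cd_mult (cd_mult j a) mj) (cd_mult (cd_mult j b) mj)"
    by (rule pad_inj)
  thus False by (simp add: j_def mj_def a_def b_def)
qed

end
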